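(* Let $\mathrm{BRM}$ denote the supremum, over all (possibly randomized) mechanisms with allocation $x:V\to[0,1]^n$ and real payment rule $p_i(v,r)$ satisfying BIC, BIR and ex-post feasibility (with perceived payments $p_i^2$), of the expected revenue $\mathbb{E}_{v,r}[\sum_i p_i(v,r)]$. Then $\mathrm{BRM}$ equals the optimal value of the program $$\max_{x}\ \sum_{i=1}^n\sum_{\ell=1}^{K_i} f_i(z_{i,\ell})\,h_i(z_{i,\ell})$$ subject to: $x_i(v)\in[0,1]$ and $\sum_i x_i(v)\le 1$ for all $v\in V$; $\hat x_i(z_{i,\ell})\ge\hat x_i(z_{i,\ell-1})$ for all $i$ and $2\le\ell\le K_i$; and $h_i(z_{i,\ell})=\sqrt{z_{i,\ell}\hat x_i(z_{i,\ell})-\sum_{j=1}^{\ell-1}(z_{i,j+1}-z_{i,j})\hat x_i(z_{i,j})}$. Moreover this value is attained by the mechanism with the optimal allocation $x$ and deterministic payments $h_i(v_i)$ depending only on bidder $i$'s own type.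
   Context: There are $n$ bidders; bidder $i$'s type space is $V_i=\{z_{i,1}<\dots<z_{i,K_i}\}\subset[0,\infty)$, types independent with pmfs $f_i$, $V=\prod_iV_i$. Bidder $i$ with true type $v_i$ reporting $w_i$ has utility $v_i x_i(w_i,v_{-i})-(\text{payment})^2$. Interim allocation $\hat x_i(v_i)=\mathbb{E}_{v_{-i}}[x_i(v_i,v_{-i})]$; interim perceived payment $\hat q_i(v_i)=\mathbb{E}_{v_{-i},r}[p_i(v_i,v_{-i},r)^2]$. BIC: $v_i\hat x_i(v_i)-\hat q_i(v_i)\ge v_i\hat x_i(w_i)-\hat q_i(w_i)$ for all $i,v_i,w_i$; BIR: $v_i\hat x_i(v_i)-\hat q_i(v_i)\ge0$; ex-post feasibility: $\sum_ix_i(v)\le1$ for all $v$. *)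

theory Defs
  imports "HOL-Probability.Probability"
begin

text \<open>Bidders are 0..n-1. Bidder i's types are z i 0 < ... < z i (K i - 1)
  (0-indexed version of z_{i,1} < ... < z_{i,K_i}); f i is its pmf on these values.\<close>

definition typeset :: "(nat \<Rightarrow> nat) \<Rightarrow> (nat \<Rightarrow> nat \<Rightarrow> real) \<Rightarrow> nat \<Rightarrow> real set" where
  "typeset K z i = z i ` {..<K i}"

definition prof :: "nat \<Rightarrow> (nat \<Rightarrow> nat) \<Rightarrow> (nat \<Rightarrow> nat \<Rightarrow> real) \<Rightarrow> (nat \<Rightarrow> real) set" where
  "prof n K z = PiE {..<n} (typeset K z)"

definition xhat :: "nat \<Rightarrow> (nat \<Rightarrow> nat) \<Rightarrow> (nat \<Rightarrow> nat \<Rightarrow> real) \<Rightarrow> (nat \<Rightarrow> real \<Rightarrow> real)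
    \<Rightarrow> ((nat \<Rightarrow> real) \<Rightarrow> nat \<Rightarrow> real) \<Rightarrow> nat \<Rightarrow> real \<Rightarrow> real" where
  "xhat n K z f x i t =
     (\<Sum>w\<in>{w\<in>prof n K z. w i = t}. (\<Prod>j\<in>{..<n}-{i}. f j (w j)) * x w i)"

definition qhat :: "nat \<Rightarrow> (nat \<Rightarrow> nat) \<Rightarrow> (nat \<Rightarrow> nat \<Rightarrow> real) \<Rightarrow> (nat \<Rightarrow> real \<Rightarrow> real)
    \<Rightarrow> 'r measure \<Rightarrow> (nat \<Rightarrow> (nat \<Rightarrow> real) \<Rightarrow> 'r \<Rightarrow> real) \<Rightarrow> nat \<Rightarrow> real \<Rightarrow> real" where
  "qhat n K z f M p i t =
     (\<Sum>w\<in>{w\<in>prof n K z. w i = t}. (\<Prod>j\<in>{..<n}-{i}. f j (w j)) * (\<integral>r. (p i w r)\<^sup>2 \<partial>M))"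

definition BIC :: "nat \<Rightarrow> (nat \<Rightarrow> nat) \<Rightarrow> (nat \<Rightarrow> nat \<Rightarrow> real) \<Rightarrow> (nat \<Rightarrow> real \<Rightarrow> real)
    \<Rightarrow> 'r measure \<Rightarrow> ((nat \<Rightarrow> real) \<Rightarrow> nat \<Rightarrow> real) \<Rightarrow> (nat \<Rightarrow> (nat \<Rightarrow> real) \<Rightarrow> 'r \<Rightarrow> real) \<Rightarrow> bool" where
  "BIC n K z f M x p \<longleftrightarrow>
     (\<forall>i<n. \<forall>v\<in>typeset K z i. \<forall>w\<in>typeset K z i.
        v * xhat n K z f x i v - qhat n K z f M p i v \<ge> v * xhat n K z f x i w - qhat n K z f M p i w)"

definition BIR :: "nat \<Rightarrow> (nat \<Rightarrow> nat) \<Rightarrow> (nat \<Rightarrow> nat \<Rightarrow> real) \<Rightarrow> (nat \<Rightarrow> real \<Rightarrow> real)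
    \<Rightarrow> 'r measure \<Rightarrow> ((nat \<Rightarrow> real) \<Rightarrow> nat \<Rightarrow> real) \<Rightarrow> (nat \<Rightarrow> (nat \<Rightarrow> real) \<Rightarrow> 'r \<Rightarrow> real) \<Rightarrow> bool" where
  "BIR n K z f M x p \<longleftrightarrow>
     (\<forall>i<n. \<forall>v\<in>typeset K z i. v * xhat n K z f x i v - qhat n K z f M p i v \<ge> 0)"

definition feasible_alloc :: "nat \<Rightarrow> (nat \<Rightarrow> nat) \<Rightarrow> (nat \<Rightarrow> nat \<Rightarrow> real)
    \<Rightarrow> ((nat \<Rightarrow> real) \<Rightarrow> nat \<Rightarrow> real) \<Rightarrow> bool" where
  "feasible_alloc n K z x \<longleftrightarrow>
     (\<forall>v\<in>prof n K z. (\<forall>i<n. 0 \<le> x v i \<and> x v i \<le> 1) \<and> (\<Sum>i<n. x v i) \<le> 1)"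

text \<open>A (possibly randomized) mechanism: randomness r drawn from the probability space M,
  real payments p i v r (measurable, with finite expected square).\<close>
definition valid_mech :: "nat \<Rightarrow> (nat \<Rightarrow> nat) \<Rightarrow> (nat \<Rightarrow> nat \<Rightarrow> real) \<Rightarrow> (nat \<Rightarrow> real \<Rightarrow> real)
    \<Rightarrow> 'r measure \<Rightarrow> ((nat \<Rightarrow> real) \<Rightarrow> nat \<Rightarrow> real) \<Rightarrow> (nat \<Rightarrow> (nat \<Rightarrow> real) \<Rightarrow> 'r \<Rightarrow> real) \<Rightarrow> bool" where
  "valid_mech n K z f M x p \<longleftrightarrow>
     prob_space M \<and> feasible_alloc n K z x \<and>
     (\<forall>i<n. \<forall>v\<in>prof n K z. p i v \<in> borel_measurable M \<and> integrable M (\<lambda>r. (p i v r)\<^sup>2)) \<and>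
     BIC n K z f M x p \<and> BIR n K z f M x p"

definition revenue :: "nat \<Rightarrow> (nat \<Rightarrow> nat) \<Rightarrow> (nat \<Rightarrow> nat \<Rightarrow> real) \<Rightarrow> (nat \<Rightarrow> real \<Rightarrow> real)
    \<Rightarrow> 'r measure \<Rightarrow> (nat \<Rightarrow> (nat \<Rightarrow> real) \<Rightarrow> 'r \<Rightarrow> real) \<Rightarrow> real" where
  "revenue n K z f M p =
     (\<Sum>v\<in>prof n K z. (\<Prod>i<n. f i (v i)) * (\<integral>r. (\<Sum>i<n. p i v r) \<partial>M))"

text \<open>h_i(z_{i,l}) (0-indexed l)\<close>
definition hfun :: "nat \<Rightarrow> (nat \<Rightarrow> nat) \<Rightarrow> (nat \<Rightarrow> nat \<Rightarrow> real) \<Rightarrow> (nat \<Rightarrow> real \<Rightarrow> real)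
    \<Rightarrow> ((nat \<Rightarrow> real) \<Rightarrow> nat \<Rightarrow> real) \<Rightarrow> nat \<Rightarrow> nat \<Rightarrow> real" where
  "hfun n K z f x i l =
     sqrt (z i l * xhat n K z f x i (z i l)
           - (\<Sum>j<l. (z i (Suc j) - z i j) * xhat n K z f x i (z i j)))"

definition program_feasible :: "nat \<Rightarrow> (nat \<Rightarrow> nat) \<Rightarrow> (nat \<Rightarrow> nat \<Rightarrow> real) \<Rightarrow> (nat \<Rightarrow> real \<Rightarrow> real)
    \<Rightarrow> ((nat \<Rightarrow> real) \<Rightarrow> nat \<Rightarrow> real) \<Rightarrow> bool" where
  "program_feasible n K z f x \<longleftrightarrow>
     feasible_alloc n K z x \<and>
     (\<forall>i<n. \<forall>l. 1 \<le> l \<and> l < K i \<longrightarrow>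
        xhat n K z f x i (z i l) \<ge> xhat n K z f x i (z i (l - 1)))"

definition program_obj :: "nat \<Rightarrow> (nat \<Rightarrow> nat) \<Rightarrow> (nat \<Rightarrow> nat \<Rightarrow> real) \<Rightarrow> (nat \<Rightarrow> real \<Rightarrow> real)
    \<Rightarrow> ((nat \<Rightarrow> real) \<Rightarrow> nat \<Rightarrow> real) \<Rightarrow> real" where
  "program_obj n K z f x = (\<Sum>i<n. \<Sum>l<K i. f i (z i l) * hfun n K z f x i l)"

definition hpay :: "nat \<Rightarrow> (nat \<Rightarrow> nat) \<Rightarrow> (nat \<Rightarrow> nat \<Rightarrow> real) \<Rightarrow> (nat \<Rightarrow> real \<Rightarrow> real)
    \<Rightarrow> ((nat \<Rightarrow> real) \<Rightarrow> nat \<Rightarrow> real) \<Rightarrow> nat \<Rightarrow> (nat \<Rightarrow> real) \<Rightarrow> 'r \<Rightarrow> real" where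
  "hpay n K z f x i v r = hfun n K z f x i (THE l. l < K i \<and> z i l = v i)"

end

theory Submission
  imports Defs
begin


lemma cont_coord [continuous_intros]:
  "continuous_on S (\<lambda>x::'a\<Rightarrow>'b\<Rightarrow>real. x w i)"
proof -
  have "continuous_on UNIV (\<lambda>x::'a\<Rightarrow>'b\<Rightarrow>real. x w)"
    by (rule continuous_on_product_coordinates)
  then have "continuous_on S (\<lambda>x::'a\<Rightarrow>'b\<Rightarrow>real. x w)"
    by (rule continuous_on_subset) simp
  then show ?thesis by (rule continuous_on_product_then_coordinatewise)
qed

lemma compact_PiE_UNIV:
  assumes "\<And>i. compact (S i)"
  shows "compact (PiE UNIV S :: ('a \<Rightarrow> 'b::topological_space) set)"
proof -
  have "compactin (product_topology (\<lambda>i. euclidean) UNIV) (PiE UNIV S)"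
    unfolding compactin_PiE using assms by simp
  then show ?thesis by (simp only: euclidean_product_topology compactin_euclidean_iff)
qed

definition box :: "'a set \<Rightarrow> nat \<Rightarrow> ('a \<Rightarrow> nat \<Rightarrow> real) set" where
  "box P n = PiE UNIV (\<lambda>v. if v \<in> P then PiE UNIV (\<lambda>i. if i<n then {0..1::real} else {0}) else {\<lambda>_. 0})"

lemma compact_box: "compact (box P n)"
  unfolding box_def
  by (intro compact_PiE_UNIV) (simp add: compact_PiE_UNIV)

lemma cont_xhat [continuous_intros]: "continuous_on S (\<lambda>x. xhat n K z f x i t)"
  unfolding xhat_def by (intro continuous_intros)

lemma cont_obj: "continuous_on S (\<lambda>x. program_obj n K z f x)"
  unfolding program_obj_def hfun_def by (intro continuous_intros)


lemma closed_feas: "closed {x. program_feasible n K z f x}"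
proof -
  have e: "{x. program_feasible n K z f x} =
    (\<Inter>v\<in>prof n K z. (\<Inter>i\<in>{..<n}. {x. 0 \<le> x v i} \<inter> {x. x v i \<le> 1}) \<inter> {x. (\<Sum>i<n. x v i) \<le> 1})
    \<inter> (\<Inter>i\<in>{..<n}. \<Inter>l\<in>{l. 1 \<le> l \<and> l < K i}.
          {x. xhat n K z f x i (z i (l - 1)) \<le> xhat n K z f x i (z i l)})"
    unfolding program_feasible_def feasible_alloc_def by auto
  show ?thesis unfolding e
    by (intro closed_Int closed_INT ballI closed_Collect_le continuous_intros)
qed

definition trunc :: "nat \<Rightarrow> (nat \<Rightarrow> nat) \<Rightarrow> (nat \<Rightarrow> nat \<Rightarrow> real)
   \<Rightarrow> ((nat \<Rightarrow> real) \<Rightarrow> nat \<Rightarrow> real) \<Rightarrow> ((nat \<Rightarrow> real) \<Rightarrow> nat \<Rightarrow> real)" where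
  "trunc n K z x = (\<lambda>v i. if v \<in> prof n K z \<and> i < n then x v i else 0)"

lemma xhat_trunc: "i < n \<Longrightarrow> xhat n K z f (trunc n K z x) i t = xhat n K z f x i t"
  unfolding xhat_def trunc_def by (intro sum.cong) auto

lemma feas_trunc: "program_feasible n K z f (trunc n K z x) = program_feasible n K z f x"
  unfolding program_feasible_def feasible_alloc_def
  by (auto simp: xhat_trunc) (auto simp: trunc_def)

lemma obj_trunc: "program_obj n K z f (trunc n K z x) = program_obj n K z f x"
  unfolding program_obj_def hfun_def by (simp add: xhat_trunc)

lemma trunc_box: "program_feasible n K z f x \<Longrightarrow> trunc n K z x \<in> box (prof n K z) n"
  unfolding box_def trunc_def program_feasible_def feasible_alloc_def
  by (auto simp: PiE_iff)

lemma zero_feas: "program_feasible n K z f (\<lambda>v i. 0)"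
  unfolding program_feasible_def feasible_alloc_def xhat_def by simp

lemma program_max:
  "\<exists>x. program_feasible n K z f x \<and> (\<forall>y. program_feasible n K z f y \<longrightarrow> program_obj n K z f y \<le> program_obj n K z f x)"
proof -
  let ?S = "box (prof n K z) n \<inter> {x. program_feasible n K z f x}"
  have c: "compact ?S" using compact_box closed_feas by (rule compact_Int_closed)
  have ne: "?S \<noteq> {}"
  proof -
    have "trunc n K z (\<lambda>v i. 0) \<in> ?S" using trunc_box[OF zero_feas] zero_feas feas_trunc by blast
    then show ?thesis by blast
  qed
  obtain x where x: "x \<in> ?S" "\<forall>y\<in>?S. program_obj n K z f y \<le> program_obj n K z f x"
    using continuous_attains_sup[OF c ne cont_obj] by blast
  show ?thesis
  proof (intro exI conjI allI impI)
    show "program_feasible n K z f x" using x by simp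
    fix y assume y: "program_feasible n K z f y"
    have "trunc n K z y \<in> ?S" using trunc_box[OF y] y feas_trunc by simp
    then show "program_obj n K z f y \<le> program_obj n K z f x" using x obj_trunc by metis
  qed
qed



context
  fixes n :: nat and K :: "nat \<Rightarrow> nat" and z :: "nat \<Rightarrow> nat \<Rightarrow> real"
    and f :: "nat \<Rightarrow> real \<Rightarrow> real"
  assumes K_pos: "\<forall>i<n. 1 \<le> K i"
    and z_mono: "\<forall>i<n. strict_mono_on {..<K i} (z i)"
    and z_nonneg: "\<forall>i<n. 0 \<le> z i 0"
    and f_pos: "\<forall>i<n. \<forall>l<K i. 0 < f i (z i l)"
    and f_sum: "\<forall>i<n. (\<Sum>l<K i. f i (z i l)) = 1"
begin

lemma fin_typeset: "finite (typeset K z i)"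
  unfolding typeset_def by simp

lemma fin_prof: "finite (prof n K z)"
  unfolding prof_def by (simp add: fin_typeset finite_PiE)

lemma typeset_sum: "i < n \<Longrightarrow> (\<Sum>t\<in>typeset K z i. H t) = (\<Sum>l<K i. H (z i l))"
  unfolding typeset_def
  by (rule sum.reindex_cong[OF strict_mono_on_imp_inj_on]) (use z_mono in auto)

lemma prof_mem: "v \<in> prof n K z \<Longrightarrow> j < n \<Longrightarrow> v j \<in> typeset K z j"
  unfolding prof_def by auto

lemma f_pos_ts: "j < n \<Longrightarrow> t \<in> typeset K z j \<Longrightarrow> 0 < f j t"
  unfolding typeset_def using f_pos by auto

lemma weight_nonneg: "w \<in> prof n K z \<Longrightarrow> 0 \<le> (\<Prod>j\<in>{..<n}-{i}. f j (w j))"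
  by (intro prod_nonneg) (auto intro: less_imp_le f_pos_ts prof_mem)

lemma slice_eq:
  assumes "i < n" "t \<in> typeset K z i"
  shows "{w\<in>prof n K z. w i = t} = PiE {..<n} (\<lambda>j. if j = i then {t} else typeset K z j)"
proof (rule set_eqI)
  fix w
  show "w \<in> {w\<in>prof n K z. w i = t} \<longleftrightarrow> w \<in> PiE {..<n} (\<lambda>j. if j = i then {t} else typeset K z j)"
  proof
    assume "w \<in> {w\<in>prof n K z. w i = t}"
    then have w: "\<forall>j\<in>{..<n}. w j \<in> typeset K z j" "w \<in> extensional {..<n}" "w i = t"
      unfolding prof_def PiE_iff by simp_all
    have "\<forall>j\<in>{..<n}. w j \<in> (if j = i then {t} else typeset K z j)"
      using w(1,3) by simp
    then show "w \<in> PiE {..<n} (\<lambda>j. if j = i then {t} else typeset K z j)"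
      unfolding PiE_iff using w(2) by blast
  next
    assume "w \<in> PiE {..<n} (\<lambda>j. if j = i then {t} else typeset K z j)"
    then have w: "\<forall>j\<in>{..<n}. w j \<in> (if j = i then {t} else typeset K z j)" "w \<in> extensional {..<n}"
      unfolding PiE_iff by simp_all
    have "\<forall>j\<in>{..<n}. w j \<in> typeset K z j"
    proof
      fix j assume j: "j \<in> {..<n}"
      show "w j \<in> typeset K z j"
        using w(1)[rule_format, OF j] assms by (cases "j = i") simp_all
    qed
    moreover have "w i = t" using w(1)[rule_format, of i] assms(1) by simp
    ultimately show "w \<in> {w\<in>prof n K z. w i = t}"
      unfolding prof_def PiE_iff using w(2) by blast
  qed
qed

lemma weight_sum:
  assumes i: "i < n" and t: "t \<in> typeset K z i"
  shows "(\<Sum>w\<in>{w\<in>prof n K z. w i = t}. \<Prod>j\<in>{..<n}-{i}. f j (w j)) = 1"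
proof -
  define g where "g j y = (if j = i then 1 else f j y)" for j y
  have "(\<Sum>w\<in>{w\<in>prof n K z. w i = t}. \<Prod>j\<in>{..<n}-{i}. f j (w j))
      = (\<Sum>w\<in>PiE {..<n} (\<lambda>j. if j = i then {t} else typeset K z j). \<Prod>j\<in>{..<n}. g j (w j))"
  proof (rule sum.cong)
    show "{w\<in>prof n K z. w i = t} = PiE {..<n} (\<lambda>j. if j = i then {t} else typeset K z j)"
      using slice_eq[OF i t] .
  next
    fix w
    have "(\<Prod>j\<in>{..<n}. g j (w j)) = g i (w i) * (\<Prod>j\<in>{..<n}-{i}. g j (w j))"
      using i by (simp add: prod.remove)
    also have "\<dots> = (\<Prod>j\<in>{..<n}-{i}. f j (w j))"
      by (simp add: g_def)
    finally show "(\<Prod>j\<in>{..<n}-{i}. f j (w j)) = (\<Prod>j\<in>{..<n}. g j (w j))" by simp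
  qed
  also have "\<dots> = (\<Prod>j\<in>{..<n}. \<Sum>y\<in>(if j = i then {t} else typeset K z j). g j y)"
    by (rule prod_sum_PiE[symmetric]) (auto simp: fin_typeset)
  also have "\<dots> = (\<Prod>j\<in>{..<n}. 1)"
  proof (rule prod.cong)
    fix j assume j: "j \<in> {..<n}"
    show "(\<Sum>y\<in>(if j = i then {t} else typeset K z j). g j y) = 1"
    proof (cases "j = i")
      case False
      then have "(\<Sum>y\<in>(if j = i then {t} else typeset K z j). g j y) = (\<Sum>y\<in>typeset K z j. f j y)"
        by (simp add: g_def)
      also have "\<dots> = 1" using typeset_sum[of j "f j"] j f_sum by simp
      finally show ?thesis .
    qed (simp add: g_def)
  qed simp
  finally show ?thesis by simp
qed

lemma decomp:
  assumes i: "i < n"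
  shows "(\<Sum>v\<in>prof n K z. (\<Prod>j<n. f j (v j)) * G v)
       = (\<Sum>t\<in>typeset K z i. f i t * (\<Sum>w\<in>{w\<in>prof n K z. w i = t}. (\<Prod>j\<in>{..<n}-{i}. f j (w j)) * G w))"
proof -
  have "(\<Sum>v\<in>prof n K z. (\<Prod>j<n. f j (v j)) * G v)
      = (\<Sum>t\<in>typeset K z i. \<Sum>v\<in>{v\<in>prof n K z. v i = t}. (\<Prod>j<n. f j (v j)) * G v)"
    by (rule sum.group[symmetric]) (use i prof_mem in \<open>auto simp: fin_prof fin_typeset\<close>)
  also have "\<dots> = (\<Sum>t\<in>typeset K z i. f i t * (\<Sum>w\<in>{w\<in>prof n K z. w i = t}. (\<Prod>j\<in>{..<n}-{i}. f j (w j)) * G w))"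
  proof (rule sum.cong[OF refl])
    fix t
    show "(\<Sum>v\<in>{v\<in>prof n K z. v i = t}. (\<Prod>j<n. f j (v j)) * G v)
        = f i t * (\<Sum>w\<in>{w\<in>prof n K z. w i = t}. (\<Prod>j\<in>{..<n}-{i}. f j (w j)) * G w)"
      unfolding sum_distrib_left
    proof (rule sum.cong[OF refl])
      fix v assume "v \<in> {v\<in>prof n K z. v i = t}"
      then have vi: "v i = t" by simp
      have "(\<Prod>j<n. f j (v j)) = f i (v i) * (\<Prod>j\<in>{..<n}-{i}. f j (v j))"
        using i by (simp add: prod.remove)
      then show "(\<Prod>j<n. f j (v j)) * G v = f i t * ((\<Prod>j\<in>{..<n}-{i}. f j (v j)) * G v)"
        using vi by simp
    qed
  qed
  finally show ?thesis .
qed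


lemma z_le: "i < n \<Longrightarrow> m \<le> l \<Longrightarrow> l < K i \<Longrightarrow> z i m \<le> z i l"
proof -
  assume a: "i < n" "m \<le> l" "l < K i"
  have sm: "strict_mono_on {..<K i} (z i)" using z_mono a(1) by simp
  show ?thesis by (rule strict_mono_on_leD[OF sm]) (use a in simp_all)
qed

lemma z_less: "i < n \<Longrightarrow> m < l \<Longrightarrow> l < K i \<Longrightarrow> z i m < z i l"
proof -
  assume a: "i < n" "m < l" "l < K i"
  have sm: "strict_mono_on {..<K i} (z i)" using z_mono a(1) by simp
  show ?thesis by (rule strict_mono_onD[OF sm]) (use a in simp_all)
qed

lemma xhat_nonneg:
  assumes "feasible_alloc n K z x" "i < n"
  shows "0 \<le> xhat n K z f x i t"
  unfolding xhat_def
proof (intro sum_nonneg mult_nonneg_nonneg)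
  fix w assume w: "w \<in> {w\<in>prof n K z. w i = t}"
  then have wp: "w \<in> prof n K z" by simp
  then show "0 \<le> (\<Prod>j\<in>{..<n}-{i}. f j (w j))" by (rule weight_nonneg)
  have "\<forall>i<n. 0 \<le> x w i \<and> x w i \<le> 1" using assms(1) wp unfolding feasible_alloc_def by blast
  then show "0 \<le> x w i" using assms(2) by blast
qed

lemma X_mono:
  assumes "program_feasible n K z f x" "i < n" "m \<le> l" "l < K i"
  shows "xhat n K z f x i (z i m) \<le> xhat n K z f x i (z i l)"
  using assms(3,4)
proof (induction l rule: dec_induct)
  case base then show ?case by simp
next
  case (step l)
  have "xhat n K z f x i (z i (Suc l - 1)) \<le> xhat n K z f x i (z i (Suc l))"
  proof -
    have "\<forall>i<n. \<forall>l. 1 \<le> l \<and> l < K i \<longrightarrow>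
        xhat n K z f x i (z i l) \<ge> xhat n K z f x i (z i (l - 1))"
      using assms(1) unfolding program_feasible_def by (rule conjunct2)
    then show ?thesis using assms(2) step.prems by (metis One_nat_def Suc_le_mono le0)
  qed
  then show ?case using step by simp
qed

definition Sm :: "((nat \<Rightarrow> real) \<Rightarrow> nat \<Rightarrow> real) \<Rightarrow> nat \<Rightarrow> nat \<Rightarrow> real" where
  "Sm x i l = (\<Sum>j<l. (z i (Suc j) - z i j) * xhat n K z f x i (z i j))"

lemma Sdiff:
  assumes "program_feasible n K z f x" "i < n" "m \<le> l" "l < K i"
  shows "(z i l - z i m) * xhat n K z f x i (z i m) \<le> Sm x i l - Sm x i m
       \<and> Sm x i l - Sm x i m \<le> (z i l - z i m) * xhat n K z f x i (z i l)"
  using assms(3,4)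
proof (induction l rule: dec_induct)
  case base then show ?case by simp
next
  case (step l)
  let ?X = "\<lambda>l. xhat n K z f x i (z i l)"
  have IH: "(z i l - z i m) * ?X m \<le> Sm x i l - Sm x i m" "Sm x i l - Sm x i m \<le> (z i l - z i m) * ?X l"
    using step by simp_all
  have S: "Sm x i (Suc l) = Sm x i l + (z i (Suc l) - z i l) * ?X l"
    unfolding Sm_def by simp
  have d1: "0 \<le> z i (Suc l) - z i l" using z_le[OF assms(2), of l "Suc l"] step by simp
  have d2: "0 \<le> z i l - z i m" using z_le[OF assms(2) step(1)] step by simp
  have x1: "?X m \<le> ?X l" using X_mono[OF assms(1,2) step(1)] step by simp
  have x2: "?X l \<le> ?X (Suc l)" using X_mono[OF assms(1,2), of l "Suc l"] step by simp
  have a: "(z i (Suc l) - z i l) * ?X m \<le> (z i (Suc l) - z i l) * ?X l"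
    using mult_left_mono[OF x1 d1] .
  have b: "(z i l - z i m) * ?X l \<le> (z i l - z i m) * ?X (Suc l)"
    using mult_left_mono[OF x2 d2] .
  have c: "(z i (Suc l) - z i l) * ?X l \<le> (z i (Suc l) - z i l) * ?X (Suc l)"
    using mult_left_mono[OF x2 d1] .
  show ?case
  proof
    show "(z i (Suc l) - z i m) * ?X m \<le> Sm x i (Suc l) - Sm x i m"
      using IH(1) a S by (simp add: algebra_simps)
    show "Sm x i (Suc l) - Sm x i m \<le> (z i (Suc l) - z i m) * ?X (Suc l)"
      using IH(2) b c S by (simp add: algebra_simps)
  qed
qed

lemma Sm0: "Sm x i 0 = 0" unfolding Sm_def by simp

lemma hfun_Sm: "hfun n K z f x i l = sqrt (z i l * xhat n K z f x i (z i l) - Sm x i l)"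
  unfolding hfun_def Sm_def by simp

lemma E_nonneg:
  assumes "program_feasible n K z f x" "i < n" "l < K i"
  shows "0 \<le> z i l * xhat n K z f x i (z i l) - Sm x i l"
proof -
  have "Sm x i l \<le> (z i l - z i 0) * xhat n K z f x i (z i l)"
    using Sdiff[OF assms(1,2), of 0 l] assms Sm0 by simp
  moreover have "0 \<le> z i 0 * xhat n K z f x i (z i l)"
    using z_nonneg assms xhat_nonneg[of x i] unfolding program_feasible_def by simp
  ultimately show ?thesis by (simp add: algebra_simps)
qed

lemma hpay_eq:
  assumes "i < n" "l < K i" "w i = z i l"
  shows "hpay n K z f x i w r = hfun n K z f x i l"
proof -
  have "(THE l'. l' < K i \<and> z i l' = w i) = l"
  proof (rule the_equality)
    show "l < K i \<and> z i l = w i" using assms by simp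
    fix l' assume "l' < K i \<and> z i l' = w i"
    then show "l' = l"
      using strict_mono_on_imp_inj_on[of "{..<K i}" "z i"] z_mono assms
      unfolding inj_on_def by auto
  qed
  then show ?thesis unfolding hpay_def by simp
qed


lemma typeset_obtain:
  assumes "v \<in> typeset K z i"
  obtains l where "l < K i" "v = z i l"
  using assms unfolding typeset_def by auto

lemma hpay_qhat:
  assumes M: "prob_space M" and x: "program_feasible n K z f x" and i: "i < n" and l: "l < K i"
  shows "qhat n K z f M (hpay n K z f x) i (z i l) = z i l * xhat n K z f x i (z i l) - Sm x i l"
proof -
  let ?h = "hfun n K z f x i l"
  have t: "z i l \<in> typeset K z i" using l unfolding typeset_def by simp
  have m1: "measure M (space M) = 1" using M by (simp add: prob_space.prob_space)
  have "qhat n K z f M (hpay n K z f x) i (z i l)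
      = (\<Sum>w\<in>{w\<in>prof n K z. w i = z i l}. (\<Prod>j\<in>{..<n}-{i}. f j (w j)) * ?h\<^sup>2)"
    unfolding qhat_def
  proof (rule sum.cong[OF refl])
    fix w assume "w \<in> {w\<in>prof n K z. w i = z i l}"
    then have wi: "w i = z i l" by simp
    have "(\<integral>r. (hpay n K z f x i w r)\<^sup>2 \<partial>M) = (\<integral>r. ?h\<^sup>2 \<partial>M)"
      by (rule Bochner_Integration.integral_cong[OF refl]) (simp add: hpay_eq[where w=w and l=l, OF i l wi])
    then show "(\<Prod>j\<in>{..<n}-{i}. f j (w j)) * (\<integral>r. (hpay n K z f x i w r)\<^sup>2 \<partial>M)
             = (\<Prod>j\<in>{..<n}-{i}. f j (w j)) * ?h\<^sup>2"
      using m1 by simp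
  qed
  also have "\<dots> = ?h\<^sup>2 * (\<Sum>w\<in>{w\<in>prof n K z. w i = z i l}. (\<Prod>j\<in>{..<n}-{i}. f j (w j)))"
    by (simp add: sum_distrib_left mult.commute)
  also have "\<dots> = ?h\<^sup>2" using weight_sum[OF i t] by simp
  also have "\<dots> = z i l * xhat n K z f x i (z i l) - Sm x i l"
    unfolding hfun_Sm using E_nonneg[OF x i l] by simp
  finally show ?thesis .
qed

lemma hpay_valid:
  assumes M: "prob_space M" and x: "program_feasible n K z f x"
  shows "valid_mech n K z f M x (hpay n K z f x)"
  unfolding valid_mech_def
proof (intro conjI allI impI ballI)
  show "prob_space M" by (rule M)
  show "feasible_alloc n K z x" using x unfolding program_feasible_def by simp
  fix i v assume "i < n" "v \<in> prof n K z"
  show "hpay n K z f x i v \<in> borel_measurable M" unfolding hpay_def by simp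
  show "integrable M (\<lambda>r. (hpay n K z f x i v r)\<^sup>2)"
    using M unfolding hpay_def by (simp add: prob_space.finite_measure finite_measure.integrable_const)
next
  show "BIC n K z f M x (hpay n K z f x)"
    unfolding BIC_def
  proof (intro allI impI ballI)
    fix i v w assume i: "i < n" and v: "v \<in> typeset K z i" and w: "w \<in> typeset K z i"
    obtain l where l: "l < K i" "v = z i l" using v by (rule typeset_obtain)
    obtain m where m: "m < K i" "w = z i m" using w by (rule typeset_obtain)
    let ?X = "\<lambda>l. xhat n K z f x i (z i l)"
    have "Sm x i l - Sm x i m \<ge> (z i l - z i m) * ?X m"
    proof (cases "m \<le> l")
      case True then show ?thesis using Sdiff[OF x i True l(1)] by simp
    next
      case False
      then have "l \<le> m" by simp
      then have "Sm x i m - Sm x i l \<le> (z i m - z i l) * ?X m" using Sdiff[OF x i _ m(1)] by simp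
      then show ?thesis by (simp add: algebra_simps)
    qed
    then show "v * xhat n K z f x i w - qhat n K z f M (hpay n K z f x) i w
           \<le> v * xhat n K z f x i v - qhat n K z f M (hpay n K z f x) i v"
      unfolding l(2) m(2) hpay_qhat[OF M x i l(1)] hpay_qhat[OF M x i m(1)]
      by (simp add: algebra_simps)
  qed
next
  show "BIR n K z f M x (hpay n K z f x)"
    unfolding BIR_def
  proof (intro allI impI ballI)
    fix i v assume i: "i < n" and v: "v \<in> typeset K z i"
    obtain l where l: "l < K i" "v = z i l" using v by (rule typeset_obtain)
    have "(z i l - z i 0) * xhat n K z f x i (z i 0) \<le> Sm x i l - Sm x i 0"
      using Sdiff[OF x i _ l(1), of 0] by simp
    moreover have "0 \<le> (z i l - z i 0) * xhat n K z f x i (z i 0)"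
      using z_le[OF i _ l(1), of 0] xhat_nonneg[of x i] x i
      unfolding program_feasible_def by simp
    ultimately show "0 \<le> v * xhat n K z f x i v - qhat n K z f M (hpay n K z f x) i v"
      unfolding l(2) hpay_qhat[OF M x i l(1)] using Sm0 by simp
  qed
qed

lemma hpay_rev:
  assumes M: "prob_space M" and x: "program_feasible n K z f x"
  shows "revenue n K z f M (hpay n K z f x) = program_obj n K z f x"
proof -
  have m1: "measure M (space M) = 1" using M by (simp add: prob_space.prob_space)
  define hv where "hv i v = hfun n K z f x i (THE l. l < K i \<and> z i l = v i)" for i v
  have hv_eq: "hv i w = hfun n K z f x i l" if "i < n" "l < K i" "w i = z i l" for i l w
    using hpay_eq[where w=w and x=x and r=undefined, OF that] unfolding hpay_def hv_def by simp
  have "revenue n K z f M (hpay n K z f x)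
      = (\<Sum>v\<in>prof n K z. (\<Prod>j<n. f j (v j)) * (\<Sum>i<n. hv i v))"
    unfolding revenue_def using m1 by (simp add: hpay_def hv_def)
  also have "\<dots> = (\<Sum>i<n. \<Sum>v\<in>prof n K z. (\<Prod>j<n. f j (v j)) * hv i v)"
    by (simp add: sum_distrib_left sum.swap[of _ "prof n K z"])
  also have "\<dots> = (\<Sum>i<n. \<Sum>l<K i. f i (z i l) * hfun n K z f x i l)"
  proof (rule sum.cong[OF refl])
    fix i assume "i \<in> {..<n}"
    then have i: "i < n" by simp
    have "(\<Sum>v\<in>prof n K z. (\<Prod>j<n. f j (v j)) * hv i v)
        = (\<Sum>t\<in>typeset K z i. f i t * (\<Sum>w\<in>{w\<in>prof n K z. w i = t}. (\<Prod>j\<in>{..<n}-{i}. f j (w j)) * hv i w))"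
      by (rule decomp[OF i])
    also have "\<dots> = (\<Sum>l<K i. f i (z i l) * (\<Sum>w\<in>{w\<in>prof n K z. w i = z i l}. (\<Prod>j\<in>{..<n}-{i}. f j (w j)) * hv i w))"
      by (rule typeset_sum[OF i])
    also have "\<dots> = (\<Sum>l<K i. f i (z i l) * hfun n K z f x i l)"
    proof (rule sum.cong[OF refl])
      fix l assume "l \<in> {..<K i}"
      then have l: "l < K i" by simp
      have t: "z i l \<in> typeset K z i" using l unfolding typeset_def by simp
      have "(\<Sum>w\<in>{w\<in>prof n K z. w i = z i l}. (\<Prod>j\<in>{..<n}-{i}. f j (w j)) * hv i w)
          = (\<Sum>w\<in>{w\<in>prof n K z. w i = z i l}. (\<Prod>j\<in>{..<n}-{i}. f j (w j)) * hfun n K z f x i l)"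
        by (rule sum.cong[OF refl]) (simp add: hv_eq[OF i l])
      also have "\<dots> = hfun n K z f x i l"
        using weight_sum[OF i t] by (simp add: sum_distrib_right[symmetric])
      finally show "f i (z i l) * (\<Sum>w\<in>{w\<in>prof n K z. w i = z i l}. (\<Prod>j\<in>{..<n}-{i}. f j (w j)) * hv i w)
          = f i (z i l) * hfun n K z f x i l" by simp
    qed
    finally show "(\<Sum>v\<in>prof n K z. (\<Prod>j<n. f j (v j)) * hv i v)
        = (\<Sum>l<K i. f i (z i l) * hfun n K z f x i l)" .
  qed
  also have "\<dots> = program_obj n K z f x" unfolding program_obj_def by simp
  finally show ?thesis .
qed


lemma valid_parts:
  assumes "valid_mech n K z f M x p"
  shows "prob_space M" "feasible_alloc n K z x"
    "\<And>i v. i < n \<Longrightarrow> v \<in> prof n K z \<Longrightarrow> p i v \<in> borel_measurable M"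
    "\<And>i v. i < n \<Longrightarrow> v \<in> prof n K z \<Longrightarrow> integrable M (\<lambda>r. (p i v r)\<^sup>2)"
    "BIC n K z f M x p" "BIR n K z f M x p"
  using assms unfolding valid_mech_def by auto

lemma BIC_at:
  assumes "valid_mech n K z f M x p" "i < n" "l < K i" "m < K i"
  shows "z i l * xhat n K z f x i (z i l) - qhat n K z f M p i (z i l)
       \<ge> z i l * xhat n K z f x i (z i m) - qhat n K z f M p i (z i m)"
proof -
  have "\<forall>i<n. \<forall>v\<in>typeset K z i. \<forall>w\<in>typeset K z i.
        v * xhat n K z f x i v - qhat n K z f M p i v \<ge> v * xhat n K z f x i w - qhat n K z f M p i w"
    using valid_parts(5)[OF assms(1)] unfolding BIC_def .
  moreover have "z i l \<in> typeset K z i" "z i m \<in> typeset K z i"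
    using assms unfolding typeset_def by simp_all
  ultimately show ?thesis using assms(2) by blast
qed

lemma BIR_at:
  assumes "valid_mech n K z f M x p" "i < n" "l < K i"
  shows "0 \<le> z i l * xhat n K z f x i (z i l) - qhat n K z f M p i (z i l)"
proof -
  have "\<forall>i<n. \<forall>v\<in>typeset K z i. v * xhat n K z f x i v - qhat n K z f M p i v \<ge> 0"
    using valid_parts(6)[OF assms(1)] unfolding BIR_def .
  moreover have "z i l \<in> typeset K z i" using assms unfolding typeset_def by simp
  ultimately show ?thesis using assms(2) by blast
qed

lemma valid_feas:
  assumes v: "valid_mech n K z f M x p"
  shows "program_feasible n K z f x"
  unfolding program_feasible_def
proof (intro conjI allI impI)
  show "feasible_alloc n K z x" using valid_parts(2)[OF v] .
  fix i l assume i: "i < n" and l: "1 \<le> l \<and> l < K i"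
  let ?a = "z i (l - 1)" and ?b = "z i l"
  let ?Xa = "xhat n K z f x i ?a" and ?Xb = "xhat n K z f x i ?b"
  let ?Qa = "qhat n K z f M p i ?a" and ?Qb = "qhat n K z f M p i ?b"
  have lm: "l - 1 < K i" "l < K i" using l by auto
  have 1: "?b * ?Xb - ?Qb \<ge> ?b * ?Xa - ?Qa" by (rule BIC_at[OF v i lm(2) lm(1)])
  have 2: "?a * ?Xa - ?Qa \<ge> ?a * ?Xb - ?Qb" by (rule BIC_at[OF v i lm(1) lm(2)])
  have ab: "?a < ?b" using z_less[OF i, of "l - 1" l] l by simp
  have "(?b - ?a) * ?Xa \<le> (?b - ?a) * ?Xb" using 1 2 by (simp add: algebra_simps)
  then show "?Xa \<le> ?Xb" using ab by (simp add: mult_le_cancel_left_pos)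
qed

lemma q_bound:
  assumes v: "valid_mech n K z f M x p" and i: "i < n"
  shows "l < K i \<Longrightarrow> qhat n K z f M p i (z i l) \<le> z i l * xhat n K z f x i (z i l) - Sm x i l"
proof (induction l)
  case 0
  then show ?case using BIR_at[OF v i 0] Sm0 by simp
next
  case (Suc l)
  let ?X = "\<lambda>l. xhat n K z f x i (z i l)" and ?Q = "\<lambda>l. qhat n K z f M p i (z i l)"
  have IH: "?Q l \<le> z i l * ?X l - Sm x i l" using Suc by simp
  have b: "z i (Suc l) * ?X (Suc l) - ?Q (Suc l) \<ge> z i (Suc l) * ?X l - ?Q l"
    using BIC_at[OF v i Suc.prems, of l] Suc.prems by simp
  have S: "Sm x i (Suc l) = Sm x i l + z i (Suc l) * ?X l - z i l * ?X l"
    unfolding Sm_def by (simp add: algebra_simps)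
  show ?case using IH b S by linarith
qed

lemma sqrt_aux:
  fixes X Q :: real
  assumes "\<And>c. c > 0 \<Longrightarrow> X \<le> Q / (2 * c) + c / 2" "0 \<le> Q"
  shows "X \<le> sqrt Q"
proof (cases "Q = 0")
  case True
  show ?thesis
  proof (rule ccontr)
    assume "\<not> X \<le> sqrt Q"
    then have "X > 0" using True by simp
    then have "X \<le> X / 2" using assms(1)[of X] True by simp
    then show False using \<open>X > 0\<close> by simp
  qed
next
  case False
  then have q: "sqrt Q > 0" using assms(2) by simp
  have "X \<le> Q / (2 * sqrt Q) + sqrt Q / 2" using assms(1)[OF q] .
  also have "Q / (2 * sqrt Q) = sqrt Q / 2"
    using q assms(2) by (simp add: field_simps real_sqrt_mult[symmetric])
  finally show ?thesis by simp
qed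

lemma int_bound:
  fixes g :: "'a \<Rightarrow> real"
  assumes M: "prob_space M" and g: "g \<in> borel_measurable M" "integrable M (\<lambda>r. (g r)\<^sup>2)" and c: "c > 0"
  shows "(\<integral>r. g r \<partial>M) \<le> (\<integral>r. (g r)\<^sup>2 \<partial>M) / (2 * c) + c / 2"
proof -
  interpret prob_space M by (rule M)
  have gi: "integrable M g" by (rule square_integrable_imp_integrable[OF g])
  have pt: "g r \<le> (g r)\<^sup>2 / (2 * c) + c / 2" for r
  proof -
    have "0 \<le> (g r - c)\<^sup>2" by simp
    then have "2 * c * g r \<le> (g r)\<^sup>2 + c\<^sup>2" by (simp add: power2_eq_square algebra_simps)
    then show ?thesis using c by (simp add: field_simps power2_eq_square)
  qed
  have "(\<integral>r. g r \<partial>M) \<le> (\<integral>r. (g r)\<^sup>2 / (2 * c) + c / 2 \<partial>M)"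
    by (rule integral_mono[OF gi]) (use g pt in auto)
  also have "\<dots> = (\<integral>r. (g r)\<^sup>2 \<partial>M) / (2 * c) + c / 2"
    using g prob_space by simp
  finally show ?thesis .
qed

lemma qhat_nonneg:
  assumes "i < n" shows "0 \<le> qhat n K z f M p i t"
  unfolding qhat_def
  by (intro sum_nonneg mult_nonneg_nonneg integral_nonneg) (auto intro: weight_nonneg)

lemma slice_bound:
  assumes v: "valid_mech n K z f M x p" and i: "i < n" and t: "t \<in> typeset K z i"
  shows "(\<Sum>w\<in>{w\<in>prof n K z. w i = t}. (\<Prod>j\<in>{..<n}-{i}. f j (w j)) * (\<integral>r. p i w r \<partial>M))
       \<le> sqrt (qhat n K z f M p i t)"
proof (rule sqrt_aux)
  show "0 \<le> qhat n K z f M p i t" using qhat_nonneg[OF i] .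
  fix c :: real assume c: "c > 0"
  let ?S = "{w\<in>prof n K z. w i = t}" and ?a = "\<lambda>w. (\<Prod>j\<in>{..<n}-{i}. f j (w j))"
  have "(\<Sum>w\<in>?S. ?a w * (\<integral>r. p i w r \<partial>M))
      \<le> (\<Sum>w\<in>?S. ?a w * ((\<integral>r. (p i w r)\<^sup>2 \<partial>M) / (2 * c) + c / 2))"
  proof (rule sum_mono)
    fix w assume w: "w \<in> ?S"
    then have wp: "w \<in> prof n K z" by simp
    show "?a w * (\<integral>r. p i w r \<partial>M) \<le> ?a w * ((\<integral>r. (p i w r)\<^sup>2 \<partial>M) / (2 * c) + c / 2)"
      by (rule mult_left_mono[OF int_bound weight_nonneg[OF wp]])
         (use valid_parts[OF v] i wp c in auto)
  qed
  also have "\<dots> = qhat n K z f M p i t / (2 * c) + c / 2 * (\<Sum>w\<in>?S. ?a w)"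
    unfolding qhat_def by (simp add: sum_distrib_left sum_distrib_right sum_divide_distrib ring_distribs sum.distrib mult.commute)
  also have "\<dots> = qhat n K z f M p i t / (2 * c) + c / 2"
    using weight_sum[OF i t] by simp
  finally show "(\<Sum>w\<in>?S. ?a w * (\<integral>r. p i w r \<partial>M)) \<le> qhat n K z f M p i t / (2 * c) + c / 2" .
qed

lemma rev_bound:
  assumes v: "valid_mech n K z f M x p"
  shows "revenue n K z f M p \<le> program_obj n K z f x"
proof -
  note vp = valid_parts[OF v]
  have integ: "integrable M (p i w)" if "i < n" "w \<in> prof n K z" for i w
    using prob_space.finite_measure[OF vp(1)] vp(3)[OF that] vp(4)[OF that]
    by (simp add: finite_measure.square_integrable_imp_integrable)
  have "revenue n K z f M p = (\<Sum>v\<in>prof n K z. (\<Prod>j<n. f j (v j)) * (\<Sum>i<n. \<integral>r. p i v r \<partial>M))"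
    unfolding revenue_def
    by (rule sum.cong[OF refl]) (simp add: integral_sum integ)
  also have "\<dots> = (\<Sum>i<n. \<Sum>v\<in>prof n K z. (\<Prod>j<n. f j (v j)) * (\<integral>r. p i v r \<partial>M))"
    by (simp add: sum_distrib_left sum.swap[of _ "prof n K z"])
  also have "\<dots> \<le> (\<Sum>i<n. \<Sum>l<K i. f i (z i l) * hfun n K z f x i l)"
  proof (rule sum_mono)
    fix i assume "i \<in> {..<n}"
    then have i: "i < n" by simp
    have "(\<Sum>v\<in>prof n K z. (\<Prod>j<n. f j (v j)) * (\<integral>r. p i v r \<partial>M))
        = (\<Sum>t\<in>typeset K z i. f i t * (\<Sum>w\<in>{w\<in>prof n K z. w i = t}. (\<Prod>j\<in>{..<n}-{i}. f j (w j)) * (\<integral>r. p i w r \<partial>M)))"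
      by (rule decomp[OF i])
    also have "\<dots> = (\<Sum>l<K i. f i (z i l) * (\<Sum>w\<in>{w\<in>prof n K z. w i = z i l}. (\<Prod>j\<in>{..<n}-{i}. f j (w j)) * (\<integral>r. p i w r \<partial>M)))"
      by (rule typeset_sum[OF i])
    also have "\<dots> \<le> (\<Sum>l<K i. f i (z i l) * hfun n K z f x i l)"
    proof (rule sum_mono)
      fix l assume "l \<in> {..<K i}"
      then have l: "l < K i" by simp
      have t: "z i l \<in> typeset K z i" using l unfolding typeset_def by simp
      have "(\<Sum>w\<in>{w\<in>prof n K z. w i = z i l}. (\<Prod>j\<in>{..<n}-{i}. f j (w j)) * (\<integral>r. p i w r \<partial>M))
          \<le> sqrt (qhat n K z f M p i (z i l))" by (rule slice_bound[OF v i t])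
      also have "\<dots> \<le> hfun n K z f x i l"
        unfolding hfun_Sm using q_bound[OF v i l] by simp
      finally show "f i (z i l) * (\<Sum>w\<in>{w\<in>prof n K z. w i = z i l}. (\<Prod>j\<in>{..<n}-{i}. f j (w j)) * (\<integral>r. p i w r \<partial>M))
          \<le> f i (z i l) * hfun n K z f x i l"
        using f_pos i l by (intro mult_left_mono) (auto intro: less_imp_le)
    qed
    finally show "(\<Sum>v\<in>prof n K z. (\<Prod>j<n. f j (v j)) * (\<integral>r. p i v r \<partial>M))
        \<le> (\<Sum>l<K i. f i (z i l) * hfun n K z f x i l)" .
  qed
  also have "\<dots> = program_obj n K z f x" unfolding program_obj_def by simp
  finally show ?thesis .
qed

end

theorem mainTheorem7:
  fixes n :: nat and K :: "nat \<Rightarrow> nat" and z :: "nat \<Rightarrow> nat \<Rightarrow> real"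
    and f :: "nat \<Rightarrow> real \<Rightarrow> real"
  assumes K_pos: "\<forall>i<n. 1 \<le> K i"
    and z_mono: "\<forall>i<n. strict_mono_on {..<K i} (z i)"
    and z_nonneg: "\<forall>i<n. 0 \<le> z i 0"
    and f_pos: "\<forall>i<n. \<forall>l<K i. 0 < f i (z i l)"
    and f_sum: "\<forall>i<n. (\<Sum>l<K i. f i (z i l)) = 1"
  shows "\<exists>opt::real.
     (\<exists>x. program_feasible n K z f x \<and> program_obj n K z f x = opt) \<and>
     (\<forall>x. program_feasible n K z f x \<longrightarrow> program_obj n K z f x \<le> opt) \<and>
     Sup {revenue n K z f M p | (M :: 'r measure) x p. valid_mech n K z f M x p} = opt \<and>
     (\<forall>(M :: 'r measure) x p. valid_mech n K z f M x p \<longrightarrow> revenue n K z f M p \<le> opt) \<and>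
     (\<forall>x. program_feasible n K z f x \<and> program_obj n K z f x = opt \<longrightarrow>
        (\<forall>M :: 'r measure. prob_space M \<longrightarrow>
           valid_mech n K z f M x (hpay n K z f x) \<and>
           revenue n K z f M (hpay n K z f x) = opt))"
proof -
  note A = K_pos z_mono z_nonneg f_pos f_sum
  obtain x0 where x0: "program_feasible n K z f x0"
    "\<forall>y. program_feasible n K z f y \<longrightarrow> program_obj n K z f y \<le> program_obj n K z f x0"
    using program_max by blast
  define opt where "opt = program_obj n K z f x0"
  have ub: "revenue n K z f M p \<le> opt" if "valid_mech n K z f M x p" for M :: "'r measure" and x p
  proof -
    have "revenue n K z f M p \<le> program_obj n K z f x" by (rule rev_bound[OF A that])
    also have "\<dots> \<le> opt" unfolding opt_def using x0(2) valid_feas[OF A that] by blast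
    finally show ?thesis .
  qed
  define M0 :: "'r measure" where "M0 = return (count_space UNIV) undefined"
  have M0: "prob_space M0" unfolding M0_def by (rule prob_space_return) simp
  have mem: "opt \<in> {revenue n K z f M p | (M :: 'r measure) x p. valid_mech n K z f M x p}"
  proof -
    have "opt = revenue n K z f M0 (hpay n K z f x0) \<and> valid_mech n K z f M0 x0 (hpay n K z f x0)"
      using hpay_valid[OF A M0 x0(1)] hpay_rev[OF A M0 x0(1)] unfolding opt_def by simp
    then show ?thesis by blast
  qed
  have sup: "Sup {revenue n K z f M p | (M :: 'r measure) x p. valid_mech n K z f M x p} = opt"
    by (rule cSup_eq_maximum[OF mem]) (use ub in blast)
  show ?thesis
  proof (rule exI[of _ opt], intro conjI allI impI)
    show "\<exists>x. program_feasible n K z f x \<and> program_obj n K z f x = opt"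
      using x0(1) opt_def by blast
    fix x assume "program_feasible n K z f x"
    then show "program_obj n K z f x \<le> opt" using x0(2) opt_def by blast
  next
    show "Sup {revenue n K z f M p | (M :: 'r measure) x p. valid_mech n K z f M x p} = opt" by (rule sup)
  next
    fix M :: "'r measure" and x p assume "valid_mech n K z f M x p"
    then show "revenue n K z f M p \<le> opt" by (rule ub)
  next
    fix x and M :: "'r measure"
    assume x: "program_feasible n K z f x \<and> program_obj n K z f x = opt" and M: "prob_space M"
    show "valid_mech n K z f M x (hpay n K z f x)" using hpay_valid[OF A M] x by blast
    show "revenue n K z f M (hpay n K z f x) = opt" using hpay_rev[OF A M] x by metis
  qed
qed

end
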